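(* $m_5(6)\geq 20$. Specifically, the $6$-uniform family $\mathcal T_0\circ\binom{[3]}{2}$ (with $300$ edges) is intersecting, has covering number $6$, and satisfies $\gamma_5\big(\mathcal T_0\circ\binom{[3]}{2}\big)\geq 20$.
   Context: $\mathcal T_0\subset\binom{[6]}{3}$ is $\{\{1,2,3\},\{1,2,4\},\{3,4,5\},\{3,4,6\},\{1,5,6\},\{2,5,6\},\{1,3,5\},\{2,4,5\},\{1,4,6\},\{2,3,6\}\}$. Wreath product: for $\mathcal A\subset 2^X$, $\mathcal B\subset 2^{[n]}$, take disjoint copies $X_1,\dots,X_n$ of $X$ with copies $\mathcal A_i$ of $\mathcal A$; for $B=\{i_1,\dots,i_r\}\in\mathcal B$ let $\mathcal A^B=\{A_{i_1}\cup\dots\cup A_{i_r}:A_{i_s}\in\mathcal A_{i_s}\}$, and $\mathcal A\circ\mathcal B=\bigcup_{B\in\mathcal B}\mathcal A^B$. For a family $\mathcal F$ on ground set $Z$, $\gamma_j(\mathcal F)=\min_{S\subset Z,|S|=j}|\{F\in\mathcal F:F\cap S=\emptyset\}|$; $\tau$ is the minimum size of a set meeting all members. $m_j(k)$ is the maximum of $\gamma_j(\mathcal F)$ over all intersecting $k$-uniform families $\mathcal F$ with $\tau(\mathcal F)=k$. *)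

theory Defs
  imports Main "HOL-Library.Extended_Nat"
begin

definition T0 :: "nat set set" where
  "T0 = {{1,2,3},{1,2,4},{3,4,5},{3,4,6},{1,5,6},{2,5,6},{1,3,5},{2,4,5},{1,4,6},{2,3,6}}"

definition ksubsets :: "'a set \<Rightarrow> nat \<Rightarrow> 'a set set" where
  "ksubsets S k = {B. B \<subseteq> S \<and> card B = k}"

text \<open>Wreath product: the i-th copy of the ground set X is X \<times> {i}.\<close>
definition wreath :: "'a set set \<Rightarrow> nat set set \<Rightarrow> ('a \<times> nat) set set" where
  "wreath \<A> \<B> = (\<Union>B\<in>\<B>. {(\<Union>i\<in>B. (\<lambda>x. (x, i)) ` g i) | g. \<forall>i\<in>B. g i \<in> \<A>})"

definition intersecting :: "'a set set \<Rightarrow> bool" where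
  "intersecting \<F> \<longleftrightarrow> (\<forall>A\<in>\<F>. \<forall>B\<in>\<F>. A \<inter> B \<noteq> {})"

definition uniform :: "nat \<Rightarrow> 'a set set \<Rightarrow> bool" where
  "uniform k \<F> \<longleftrightarrow> (\<forall>F\<in>\<F>. finite F \<and> card F = k)"

definition tau :: "'a set set \<Rightarrow> nat" where
  "tau \<F> = Inf {card T | T. finite T \<and> (\<forall>F\<in>\<F>. T \<inter> F \<noteq> {})}"

definition gamma :: "nat \<Rightarrow> 'a set \<Rightarrow> 'a set set \<Rightarrow> nat" where
  "gamma j Z \<F> = Inf {card {F\<in>\<F>. F \<inter> S = {}} | S. S \<subseteq> Z \<and> card S = j}"

text \<open>m_j(k): maximum (supremum in enat) of gamma_j over intersecting k-uniform families
  with covering number k (ground set taken to be the union of the family; any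
  finite family can be relabelled into nat).\<close>
definition m :: "nat \<Rightarrow> nat \<Rightarrow> enat" where
  "m j k = Sup {enat (gamma j (\<Union>\<F>) \<F>) | \<F> :: nat set set.
                 uniform k \<F> \<and> intersecting \<F> \<and> tau \<F> = k}"

end

theory Submission
  imports Defs "HOL-Library.Nat_Bijection"
begin

lemma Collect_insert_conj: "{x \<in> insert a A. P x} = (if P a then insert a {x\<in>A. P x} else {x\<in>A. P x})" by auto
lemma Collect_empty_conj: "{x \<in> {}. P x} = {}" by auto

lemma T0_2: "\<forall>x\<in>{1,2,3,4,5,6::nat}. \<forall>y\<in>{1,2,3,4,5,6}. x\<noteq>y \<longrightarrow> card {A\<in>T0. A \<inter> {x,y} = {}} = 2"
  unfolding T0_def
  apply (simp only: ball_simps(5,7) Collect_insert_conj Collect_empty_conj) 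
  apply simp
  apply (simp add: set_eq_subset)
  done
lemma T0_1: "\<forall>x\<in>{1,2,3,4,5,6::nat}. card {A\<in>T0. A \<inter> {x} = {}} = 5"
  unfolding T0_def
  apply (simp only: ball_simps(5,7) Collect_insert_conj Collect_empty_conj) 
  apply simp
  apply (simp add: set_eq_subset)
  done
lemma T0_card: "card T0 = 10" unfolding T0_def by (simp add: set_eq_subset)
lemma T0_fin: "finite T0" unfolding T0_def by simp
lemma T0_props: "\<forall>A\<in>T0. finite A \<and> card A = 3 \<and> A \<noteq> {} \<and> A \<subseteq> {1..6} \<and> A \<inter> {1,2,3} \<noteq> {}"
  unfolding T0_def by simp
lemma T0_int: "intersecting T0" unfolding T0_def intersecting_def by simp

lemma in6: "(x::nat) \<in> {1..6} \<Longrightarrow> x \<in> {1,2,3,4,5,6}" by (simp; presburger)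

definition lb :: "nat \<Rightarrow> nat" where
  "lb s = (if s = 0 then 10 else if s = 1 then 5 else if s = 2 then 2 else 0)"

lemma T0_lb: assumes "X \<subseteq> {1..6}" shows "lb (card X) \<le> card {A\<in>T0. A \<inter> X = {}}"
proof -
  have fX: "finite X" using assms finite_subset by blast
  consider "card X = 0" | "card X = 1" | "card X = 2" | "card X > 2" by linarith
  then show ?thesis
  proof cases
    case 1 then have "X = {}" using fX by simp
    then show ?thesis using T0_card 1 by (simp add: lb_def)
  next
    case 2 then obtain x where "X = {x}" by (auto simp: card_1_singleton_iff)
    moreover have xm: "x \<in> {1,2,3,4,5,6}" using assms \<open>X = {x}\<close> in6 by blast
    ultimately have "card {A\<in>T0. A \<inter> X = {}} = 5" using bspec[OF T0_1 xm] by simp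
    then show ?thesis using 2 by (simp add: lb_def)
  next
    case 3 then obtain x y where "X = {x,y}" "x \<noteq> y" by (auto simp: card_2_iff)
    moreover have xm: "x \<in> {1,2,3,4,5,6}" and ym: "y \<in> {1,2,3,4,5,6}" using assms \<open>X = {x,y}\<close> in6 by blast+
    ultimately have "card {A\<in>T0. A \<inter> X = {}} = 2" using bspec[OF bspec[OF T0_2 xm] ym] by simp
    then show ?thesis using 3 by (simp add: lb_def)
  next
    case 4 then show ?thesis by (simp add: lb_def)
  qed
qed

lemma lb_arith: assumes "s1 + s2 + s3 = (5::nat)"
  shows "20 \<le> lb s1 * lb s2 + lb s1 * lb s3 + lb s2 * lb s3"
proof -
  have "s1 \<in> {0,1,2,3,4,5}" "s2 \<in> {0,1,2,3,4,5}" using assms by auto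
  moreover have "s3 = 5 - s1 - s2" "s1 + s2 \<le> 5" using assms by auto
  ultimately show ?thesis unfolding lb_def by (elim insertE emptyE; simp)
qed


lemma ks: "ksubsets {1,2,3::nat} 2 = {{1,2},{1,3},{2,3}}"
proof (rule set_eqI, rule iffI)
  fix x assume "x \<in> ksubsets {1,2,3::nat} 2"
  then have h: "x \<subseteq> {1,2,3}" "card x = 2" by (auto simp: ksubsets_def)
  then obtain a b where x: "x = {a,b}" "a \<noteq> b" by (auto simp: card_2_iff)
  have "a \<in> {1,2,3}" "b \<in> {1,2,3}" using h x by auto
  then show "x \<in> {{1,2},{1,3},{2,3}}" using x by (elim insertE emptyE; simp add: insert_commute)
next
  fix x assume "x \<in> {{1,2},{1,3},{2,3::nat}}"
  then show "x \<in> ksubsets {1,2,3::nat} 2" by (auto simp: ksubsets_def)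
qed

definition emb :: "nat \<Rightarrow> 'a set \<Rightarrow> ('a \<times> nat) set" where "emb i A = (\<lambda>x. (x,i)) ` A"
definition PP :: "nat \<Rightarrow> nat \<Rightarrow> 'a set set \<Rightarrow> 'a set set \<Rightarrow> ('a \<times> nat) set set" where
  "PP i j X Y = (\<lambda>(A,B). emb i A \<union> emb j B) ` (X \<times> Y)"
definition sec :: "nat \<Rightarrow> ('a \<times> nat) set \<Rightarrow> 'a set" where "sec i F = {x. (x,i) \<in> F}"

lemma sec_emb: "i \<noteq> j \<Longrightarrow> sec i (emb i A \<union> emb j B) = A"
  "i \<noteq> j \<Longrightarrow> sec j (emb i A \<union> emb j B) = B"
  by (auto simp: sec_def emb_def)

lemma PP_inj: "i \<noteq> j \<Longrightarrow> inj_on (\<lambda>(A,B). emb i A \<union> emb j B) (X \<times> Y)"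
  by (clarsimp simp: inj_on_def) (metis sec_emb)

lemma card_PP: "i \<noteq> j \<Longrightarrow> finite X \<Longrightarrow> finite Y \<Longrightarrow> card (PP i j X Y) = card X * card Y"
  by (simp add: PP_def card_image[OF PP_inj] card_cartesian_product)

lemma finite_PP: "finite X \<Longrightarrow> finite Y \<Longrightarrow> finite (PP i j X Y)"
  by (simp add: PP_def)

lemma snd_emb: "A \<noteq> {} \<Longrightarrow> B \<noteq> {} \<Longrightarrow> snd ` (emb i A \<union> emb j B) = {i,j}"
  by (auto simp: emb_def image_Un image_image)

lemma PP_disj:
  assumes "{i,j} \<noteq> {k,l}" "\<forall>A\<in>X\<union>Y\<union>X'\<union>Y'. A\<noteq>{}"
  shows "PP i j X Y \<inter> PP k l X' Y' = {}"
proof -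
  { fix F assume "F \<in> PP i j X Y" "F \<in> PP k l X' Y'"
    then obtain A B A' B' where ab: "A\<in>X" "B\<in>Y" "A'\<in>X'" "B'\<in>Y'"
      "F = emb i A \<union> emb j B" "F = emb k A' \<union> emb l B'"
      by (auto simp: PP_def)
    have ne: "A\<noteq>{}" "B\<noteq>{}" "A'\<noteq>{}" "B'\<noteq>{}" using assms(2) ab by auto
    have "snd ` F = {i,j}" using ab(5) snd_emb[OF ne(1,2)] by simp
    moreover have "snd ` F = {k,l}" using ab(6) snd_emb[OF ne(3,4)] by simp
    ultimately have False using assms(1) by simp }
  thus ?thesis by blast
qed

lemma wreath_pair:
  assumes "B = {a,b}" "a \<noteq> b"
  shows "{(\<Union>i\<in>B. (\<lambda>x. (x, i)) ` g i) | g. \<forall>i\<in>B. g i \<in> \<A>} = PP a b \<A> \<A>"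
proof (rule set_eqI, rule iffI)
  fix F assume "F \<in> {(\<Union>i\<in>B. (\<lambda>x. (x, i)) ` g i) | g. \<forall>i\<in>B. g i \<in> \<A>}"
  then obtain g where g: "F = (\<Union>i\<in>B. (\<lambda>x. (x, i)) ` g i)" "\<forall>i\<in>B. g i \<in> \<A>" by blast
  then have "F = emb a (g a) \<union> emb b (g b)" using assms by (simp add: emb_def)
  moreover have "(g a, g b) \<in> \<A> \<times> \<A>" using g assms by simp
  ultimately show "F \<in> PP a b \<A> \<A>" unfolding PP_def by force
next
  fix F assume "F \<in> PP a b \<A> \<A>"
  then obtain A A' where h: "A \<in> \<A>" "A' \<in> \<A>" "F = emb a A \<union> emb b A'" by (auto simp: PP_def)
  define g where "g = (\<lambda>i. if i = a then A else A')"
  have "F = (\<Union>i\<in>B. (\<lambda>x. (x, i)) ` g i)" using h assms by (simp add: g_def emb_def)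
  moreover have "\<forall>i\<in>B. g i \<in> \<A>" using h assms by (simp add: g_def)
  ultimately show "F \<in> {(\<Union>i\<in>B. (\<lambda>x. (x, i)) ` g i) | g. \<forall>i\<in>B. g i \<in> \<A>}" by blast
qed

lemma UN3: "(\<Union>B\<in>{x,y,z}. S B) = S x \<union> S y \<union> S z" by auto

definition W :: "(nat \<times> nat) set set" where "W = wreath T0 (ksubsets {1,2,3} 2)"

lemma W_eq: "W = PP 1 2 T0 T0 \<union> PP 1 3 T0 T0 \<union> PP 2 3 T0 T0"
  unfolding W_def wreath_def ks UN3
  using wreath_pair[of "{1,2}" 1 2 T0] wreath_pair[of "{1,3}" 1 3 T0] wreath_pair[of "{2,3}" 2 3 T0]
  by simp

abbreviation Z :: "(nat \<times> nat) set" where "Z \<equiv> {1..6} \<times> {1,2,3}"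

definition PR :: "(nat \<times> nat) set" where "PR = {(1,2),(1,3),(2,3)}"

lemma PR_props: "(i,j) \<in> PR \<Longrightarrow> i \<noteq> j \<and> i \<in> {1,2} \<and> j \<in> {2,3}"
  unfolding PR_def by auto

lemma PR_common: "(i,j) \<in> PR \<Longrightarrow> (k,l) \<in> PR \<Longrightarrow> \<exists>c. c \<in> {i,j} \<and> c \<in> {k,l}"
  unfolding PR_def by auto

lemma W_mem: "F \<in> W \<Longrightarrow> \<exists>i j A B. (i,j) \<in> PR \<and> A \<in> T0 \<and> B \<in> T0 \<and> F = emb i A \<union> emb j B"
  unfolding W_eq PP_def PR_def by auto

lemma W_memI: "(i,j) \<in> PR \<Longrightarrow> A \<in> T0 \<Longrightarrow> B \<in> T0 \<Longrightarrow> emb i A \<union> emb j B \<in> W"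
  unfolding W_eq PP_def PR_def by auto

lemma W_fin: "finite W" unfolding W_eq by (simp add: finite_PP T0_fin)

lemma W_card: "card W = 300"
proof -
  have ne: "\<forall>A\<in>T0 \<union> T0 \<union> T0 \<union> T0. A \<noteq> {}" using T0_props by auto
  have d1: "PP 1 2 T0 T0 \<inter> PP 1 3 T0 T0 = {}" by (rule PP_disj) (use ne in auto)
  have d2: "PP 1 2 T0 T0 \<inter> PP 2 3 T0 T0 = {}" by (rule PP_disj) (use ne in auto)
  have d3: "PP 1 3 T0 T0 \<inter> PP 2 3 T0 T0 = {}" by (rule PP_disj) (use ne in auto)
  have "card W = card (PP 1 2 T0 T0 \<union> PP 1 3 T0 T0) + card (PP 2 3 T0 T0)"
    unfolding W_eq by (rule card_Un_disjoint) (use d2 d3 in \<open>auto simp: finite_PP T0_fin\<close>)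
  also have "\<dots> = card (PP 1 2 T0 T0) + card (PP 1 3 T0 T0) + card (PP 2 3 T0 T0)"
    by (subst card_Un_disjoint) (use d1 in \<open>auto simp: finite_PP T0_fin\<close>)
  finally show ?thesis by (simp add: card_PP T0_fin T0_card)
qed

lemma card_emb: "card (emb i A) = card A"
  unfolding emb_def by (rule card_image) (auto simp: inj_on_def)

lemma card_emb2: "i \<noteq> j \<Longrightarrow> finite A \<Longrightarrow> finite B \<Longrightarrow> card (emb i A \<union> emb j B) = card A + card B"
proof -
  assume a: "i \<noteq> j" "finite A" "finite B"
  have "emb i A \<inter> emb j B = {}" using a by (auto simp: emb_def)
  moreover have "finite (emb i A)" "finite (emb j B)" using a by (auto simp: emb_def)
  ultimately show ?thesis by (simp add: card_Un_disjoint card_emb)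
qed

lemma W_uniform: "uniform 6 W"
  unfolding uniform_def
proof
  fix F assume "F \<in> W"
  then obtain i j A B where h: "(i,j) \<in> PR" "A \<in> T0" "B \<in> T0" "F = emb i A \<union> emb j B"
    using W_mem[OF \<open>F \<in> W\<close>] by blast
  have ij: "i \<noteq> j" using PR_props[OF h(1)] by blast
  have fA: "finite A" "card A = 3" using bspec[OF T0_props h(2)] by blast+
  have fB: "finite B" "card B = 3" using bspec[OF T0_props h(3)] by blast+
  have "card F = 6" using h(4) card_emb2[OF ij fA(1) fB(1)] fA(2) fB(2) by simp
  moreover have "finite F" using h(4) \<open>finite A\<close> \<open>finite B\<close> by (simp add: emb_def)
  ultimately show "finite F \<and> card F = 6" by simp
qed

lemma sec_mem: "i \<noteq> j \<Longrightarrow> c \<in> {i,j} \<Longrightarrow> A \<in> T0 \<Longrightarrow> B \<in> T0 \<Longrightarrow> sec c (emb i A \<union> emb j B) \<in> T0"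
  by (auto simp: sec_emb)

lemma W_int: "intersecting W"
  unfolding intersecting_def
proof (intro ballI)
  fix F G assume "F \<in> W" "G \<in> W"
  then obtain i j A B i' j' A' B' where h: "(i,j) \<in> PR" "A \<in> T0" "B \<in> T0" "F = emb i A \<union> emb j B"
    "(i',j') \<in> PR" "A' \<in> T0" "B' \<in> T0" "G = emb i' A' \<union> emb j' B'"
    using W_mem[OF \<open>F \<in> W\<close>] W_mem[OF \<open>G \<in> W\<close>] by metis
  obtain c where c: "c \<in> {i,j}" "c \<in> {i',j'}" using PR_common[OF h(1,5)] by blast
  have "sec c F \<in> T0" using sec_mem[OF _ c(1) h(2,3)] PR_props[OF h(1)] h(4) by blast
  moreover have "sec c G \<in> T0" using sec_mem[OF _ c(2) h(6,7)] PR_props[OF h(5)] h(8) by blast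
  ultimately
  have "sec c F \<inter> sec c G \<noteq> {}" using T0_int unfolding intersecting_def by blast
  then show "F \<inter> G \<noteq> {}" by (auto simp: sec_def)
qed

lemma W_sub: assumes "F \<in> W" shows "F \<subseteq> Z"
proof -
  obtain i j A B where h: "(i,j) \<in> PR" "A \<in> T0" "B \<in> T0" "F = emb i A \<union> emb j B"
    using W_mem[OF assms] by blast
  have sA: "A \<subseteq> {1..6}" using bspec[OF T0_props h(2)] by blast
  have sB: "B \<subseteq> {1..6}" using bspec[OF T0_props h(3)] by blast
  have ij: "i \<in> {1,2,3}" "j \<in> {1,2,3}" using PR_props[OF h(1)] by auto
  have "emb i A \<subseteq> Z" using sA ij(1) unfolding emb_def by blast
  moreover have "emb j B \<subseteq> Z" using sB ij(2) unfolding emb_def by blast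
  ultimately show ?thesis using h(4) by blast
qed

lemma S_decomp: "S \<subseteq> Z \<Longrightarrow> S = emb 1 (sec 1 S) \<union> emb 2 (sec 2 S) \<union> emb 3 (sec 3 S)"
  by (auto simp: emb_def sec_def)

lemma sec_sub: "S \<subseteq> Z \<Longrightarrow> sec i S \<subseteq> {1..6}"
  by (auto simp: sec_def)

lemma card_S: assumes "S \<subseteq> Z" shows "card S = card (sec 1 S) + card (sec 2 S) + card (sec 3 S)"
proof -
  have f0: "finite (sec i S)" for i using sec_sub[OF assms] finite_subset by blast
  have f: "finite (emb i (sec i S))" for i using f0 unfolding emb_def by blast
  have "card S = card (emb 1 (sec 1 S) \<union> emb 2 (sec 2 S)) + card (emb 3 (sec 3 S))"
    by (subst S_decomp[OF assms], rule card_Un_disjoint) (auto simp: f f0 emb_def)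
  also have "\<dots> = card (emb 1 (sec 1 S)) + card (emb 2 (sec 2 S)) + card (emb 3 (sec 3 S))"
    by (subst card_Un_disjoint) (auto simp: f f0 emb_def)
  finally show ?thesis by (simp add: card_emb)
qed

definition av :: "nat set \<Rightarrow> nat set set" where "av X = {A\<in>T0. A \<inter> X = {}}"

lemma av_fin: "finite (av X)" unfolding av_def using T0_fin by simp

lemma av_sub: "av X \<subseteq> T0" unfolding av_def by blast

lemma PP_av: assumes "(i,j) \<in> PR" "F \<in> PP i j (av (sec i S)) (av (sec j S))"
  shows "F \<in> {F\<in>W. F \<inter> S = {}}"
proof -
  obtain A B where h: "A \<in> av (sec i S)" "B \<in> av (sec j S)" "F = emb i A \<union> emb j B"
    using assms(2) unfolding PP_def by blast
  have "F \<in> W" using W_memI[OF assms(1)] h av_sub by blast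
  moreover have "F \<inter> S = {}" using h unfolding av_def emb_def sec_def by blast
  ultimately show ?thesis by blast
qed

lemma gammaW: assumes "S \<subseteq> Z" "card S = 5" shows "20 \<le> card {F\<in>W. F \<inter> S = {}}"
proof -
  define a1 where "a1 = av (sec 1 S)"
  define a2 where "a2 = av (sec 2 S)"
  define a3 where "a3 = av (sec 3 S)"
  have sub: "PP 1 2 a1 a2 \<union> PP 1 3 a1 a3 \<union> PP 2 3 a2 a3 \<subseteq> {F\<in>W. F \<inter> S = {}}"
    unfolding a1_def a2_def a3_def using PP_av[of 1 2 _ S] PP_av[of 1 3 _ S] PP_av[of 2 3 _ S]
    by (auto simp: PR_def)
  have fin: "finite a1" "finite a2" "finite a3" unfolding a1_def a2_def a3_def by (auto simp: av_fin)
  have ne: "\<forall>A\<in>a1 \<union> a2 \<union> a3 \<union> a3. A \<noteq> {}" "\<forall>A\<in>a1 \<union> a2 \<union> a1 \<union> a3. A \<noteq> {}"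
    using av_sub T0_props unfolding a1_def a2_def a3_def by blast+
  have d1: "PP 1 2 a1 a2 \<inter> PP 1 3 a1 a3 = {}" by (rule PP_disj) (use ne in auto)
  have d2: "PP 1 2 a1 a2 \<inter> PP 2 3 a2 a3 = {}" by (rule PP_disj) (use ne in auto)
  have d3: "PP 1 3 a1 a3 \<inter> PP 2 3 a2 a3 = {}" by (rule PP_disj) (use ne in auto)
  have "card (PP 1 2 a1 a2 \<union> PP 1 3 a1 a3 \<union> PP 2 3 a2 a3) = card (PP 1 2 a1 a2 \<union> PP 1 3 a1 a3) + card (PP 2 3 a2 a3)"
    by (rule card_Un_disjoint) (use d2 d3 fin in \<open>auto simp: finite_PP\<close>)
  also have "\<dots> = card (PP 1 2 a1 a2) + card (PP 1 3 a1 a3) + card (PP 2 3 a2 a3)"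
    by (subst card_Un_disjoint) (use d1 fin in \<open>auto simp: finite_PP\<close>)
  also have "\<dots> = card a1 * card a2 + card a1 * card a3 + card a2 * card a3"
    using fin by (simp add: card_PP)
  finally have cU: "card (PP 1 2 a1 a2 \<union> PP 1 3 a1 a3 \<union> PP 2 3 a2 a3) = card a1 * card a2 + card a1 * card a3 + card a2 * card a3" .
  have l1: "lb (card (sec 1 S)) \<le> card a1" unfolding a1_def av_def by (rule T0_lb[OF sec_sub[OF assms(1)]])
  have l2: "lb (card (sec 2 S)) \<le> card a2" unfolding a2_def av_def by (rule T0_lb[OF sec_sub[OF assms(1)]])
  have l3: "lb (card (sec 3 S)) \<le> card a3" unfolding a3_def av_def by (rule T0_lb[OF sec_sub[OF assms(1)]])
  have "20 \<le> lb (card (sec 1 S)) * lb (card (sec 2 S)) + lb (card (sec 1 S)) * lb (card (sec 3 S)) + lb (card (sec 2 S)) * lb (card (sec 3 S))"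
    by (rule lb_arith) (use card_S[OF assms(1)] assms(2) in simp)
  also have "\<dots> \<le> card a1 * card a2 + card a1 * card a3 + card a2 * card a3"
    using l1 l2 l3 by (intro add_mono mult_le_mono)
  also have "\<dots> \<le> card {F\<in>W. F \<inter> S = {}}"
    unfolding cU[symmetric] by (rule card_mono) (use sub W_fin in auto)
  finally show ?thesis .
qed

lemma cover_W: assumes "finite T" "\<forall>F\<in>W. T \<inter> F \<noteq> {}" shows "6 \<le> card T"
proof (rule ccontr)
  assume "\<not> 6 \<le> card T"
  define T' where "T' = T \<inter> Z"
  have "card T' \<le> card T" unfolding T'_def by (rule card_mono[OF assms(1)]) blast
  then have cT': "card T' \<le> 5" using \<open>\<not> 6 \<le> card T\<close> by linarith
  have fZ: "finite Z" by simp
  have cZ: "card Z = 18" by simp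
  have T'Z: "T' \<subseteq> Z" unfolding T'_def by blast
  have fT': "finite T'" using T'Z fZ finite_subset by blast
  have "card (Z - T') = 18 - card T'" using card_Diff_subset[OF fT' T'Z] cZ by simp
  then have "5 - card T' \<le> card (Z - T')" using cT' by linarith
  then obtain S0 where S0: "S0 \<subseteq> Z - T'" "card S0 = 5 - card T'" "finite S0"
    by (rule obtain_subset_with_card_n)
  define S where "S = T' \<union> S0"
  have "card S = card T' + card S0" unfolding S_def by (rule card_Un_disjoint) (use fT' S0 in auto)
  then have cS: "card S = 5" using S0(2) cT' by simp
  have SZ: "S \<subseteq> Z" unfolding S_def using T'Z S0 by blast
  have E: "{F\<in>W. F \<inter> S = {}} = {}"
  proof -
    { fix F assume F: "F \<in> W" "F \<inter> S = {}"
      have "T \<inter> F \<noteq> {}" using assms(2) F(1) by blast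
      then have "T' \<inter> F \<noteq> {}" using W_sub[OF F(1)] unfolding T'_def by blast
      then have False using F(2) unfolding S_def by blast }
    then show ?thesis by blast
  qed
  have "20 \<le> card {F\<in>W. F \<inter> S = {}}" by (rule gammaW[OF SZ cS])
  then show False unfolding E by simp
qed

definition C :: "(nat \<times> nat) set" where "C = emb 1 {1,2,3} \<union> emb 2 {1,2,3}"

lemma C_card: "card C = 6" unfolding C_def by (subst card_emb2) auto

lemma C_cover: assumes "F \<in> W" shows "C \<inter> F \<noteq> {}"
proof -
  obtain i j A B where h: "(i,j) \<in> PR" "A \<in> T0" "B \<in> T0" "F = emb i A \<union> emb j B"
    using W_mem[OF assms] by blast
  have i: "i \<in> {1,2}" using PR_props[OF h(1)] by blast
  have "A \<inter> {1,2,3} \<noteq> {}" using bspec[OF T0_props h(2)] by blast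
  then obtain x where x: "x \<in> A" "x \<in> {1,2,3}" by blast
  have "(x,i) \<in> F" using h(4) x(1) unfolding emb_def by blast
  moreover have "(x,i) \<in> C" using i x(2) unfolding C_def emb_def by blast
  ultimately show ?thesis by blast
qed

lemma tau_W: "tau W = 6"
  unfolding tau_def
proof (rule cInf_eq_minimum)
  show "6 \<in> {card T |T. finite T \<and> (\<forall>F\<in>W. T \<inter> F \<noteq> {})}"
  proof -
    have "finite C" unfolding C_def emb_def by simp
    then have "card C \<in> {card T |T. finite T \<and> (\<forall>F\<in>W. T \<inter> F \<noteq> {})}" using C_cover by blast
    then show ?thesis using C_card by simp
  qed
next
  fix x assume "x \<in> {card T |T. finite T \<and> (\<forall>F\<in>W. T \<inter> F \<noteq> {})}"
  then show "6 \<le> x" using cover_W by blast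
qed

lemma gamma_W: "20 \<le> gamma 5 Z W"
  unfolding gamma_def
proof (rule cInf_greatest)
  let ?S = "{(1,1),(2,1),(3,1),(4,1),(5,1)} :: (nat \<times> nat) set"
  have "?S \<subseteq> Z" "card ?S = 5" by auto
  then show "{card {F \<in> W. F \<inter> S = {}} |S. S \<subseteq> Z \<and> card S = 5} \<noteq> {}" by blast
next
  fix x assume "x \<in> {card {F \<in> W. F \<inter> S = {}} |S. S \<subseteq> Z \<and> card S = 5}"
  then show "20 \<le> x" using gammaW by blast
qed

abbreviation h :: "nat \<times> nat \<Rightarrow> nat" where "h \<equiv> prod_encode"
definition Fn :: "nat set set" where "Fn = image h ` W"

lemma inj_h: "inj h" by (rule inj_prod_encode)

lemma Fn_uniform: "uniform 6 Fn"
  using W_uniform unfolding uniform_def Fn_def by (auto simp: card_image[OF inj_on_subset[OF inj_h]])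

lemma Fn_int: "intersecting Fn"
  using W_int unfolding intersecting_def Fn_def by (auto simp: image_Int[OF inj_h, symmetric])

lemma Fn_tau: "tau Fn = 6"
  unfolding tau_def
proof (rule cInf_eq_minimum)
  have fC: "finite C" unfolding C_def emb_def by simp
  have "finite (h ` C)" using fC by simp
  moreover have "\<forall>G\<in>Fn. h ` C \<inter> G \<noteq> {}"
    unfolding Fn_def using C_cover by (auto simp: image_Int[OF inj_h, symmetric])
  ultimately have "card (h ` C) \<in> {card T |T. finite T \<and> (\<forall>F\<in>Fn. T \<inter> F \<noteq> {})}" by blast
  moreover have "card (h ` C) = 6" using C_card card_image[OF inj_on_subset[OF inj_h]] by simp
  ultimately show "6 \<in> {card T |T. finite T \<and> (\<forall>F\<in>Fn. T \<inter> F \<noteq> {})}" by simp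
next
  fix x assume "x \<in> {card T |T. finite T \<and> (\<forall>F\<in>Fn. T \<inter> F \<noteq> {})}"
  then obtain T where T: "x = card T" "finite T" "\<forall>F\<in>Fn. T \<inter> F \<noteq> {}" by blast
  have f: "finite (h -` T)" using T(2) finite_vimageI[OF _ inj_h] by blast
  have "\<forall>F\<in>W. h -` T \<inter> F \<noteq> {}"
  proof
    fix F assume "F \<in> W"
    then have "T \<inter> h ` F \<noteq> {}" using T(3) unfolding Fn_def by blast
    then show "h -` T \<inter> F \<noteq> {}" by blast
  qed
  then have "6 \<le> card (h -` T)" using cover_W f by blast
  also have "card (h -` T) = card (h ` (h -` T))" by (rule card_image[OF inj_on_subset[OF inj_h], symmetric]) simp
  also have "\<dots> \<le> card T" by (rule card_mono[OF T(2)]) blast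
  finally show "6 \<le> x" using T(1) by simp
qed

lemma Fn_gamma: "20 \<le> gamma 5 (\<Union>Fn) Fn"
  unfolding gamma_def
proof (rule cInf_greatest)
  define E :: "(nat \<times> nat) set" where "E = emb 1 {1,2,3} \<union> emb 2 {1,2,4}"
  have t1: "{1,2,3} \<in> T0" and t2: "{1,2,4} \<in> T0" unfolding T0_def by simp_all
  have "E \<in> W" unfolding E_def by (rule W_memI[OF _ t1 t2]) (simp add: PR_def)
  then have sub: "h ` E \<subseteq> \<Union>Fn" unfolding Fn_def by blast
  have "card E = 6" unfolding E_def by (subst card_emb2) auto
  then have "card (h ` E) = 6" using card_image[OF inj_on_subset[OF inj_h]] by simp
  then have "5 \<le> card (h ` E)" by simp
  then obtain S where S: "S \<subseteq> h ` E" "card S = 5" "finite S" by (rule obtain_subset_with_card_n)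
  have SU: "S \<subseteq> \<Union>Fn" using S(1) sub by (rule subset_trans)
  have "card {F \<in> Fn. F \<inter> S = {}} \<in> {card {F \<in> Fn. F \<inter> S = {}} |S. S \<subseteq> \<Union>Fn \<and> card S = 5}"
    by (intro CollectI exI[of _ S]) (simp add: SU S(2))
  then show "{card {F \<in> Fn. F \<inter> S = {}} |S. S \<subseteq> \<Union>Fn \<and> card S = 5} \<noteq> {}" by blast
next
  fix x assume "x \<in> {card {F \<in> Fn. F \<inter> S = {}} |S. S \<subseteq> \<Union>Fn \<and> card S = 5}"
  then obtain S' where S': "x = card {F \<in> Fn. F \<inter> S' = {}}" "S' \<subseteq> \<Union>Fn" "card S' = 5" by blast
  define S where "S = h -` S'"
  have cS: "card S = 5" unfolding S_def using card_vimage_inj[OF inj_h, of S'] surj_prod_encode S'(3) by simp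
  have SZ: "S \<subseteq> Z"
  proof
    fix y assume "y \<in> S"
    then have "h y \<in> \<Union>Fn" using S'(2) unfolding S_def by blast
    then obtain F where "F \<in> W" "h y \<in> h ` F" unfolding Fn_def by blast
    then have "y \<in> F" using inj_h by (auto dest: injD)
    then show "y \<in> Z" using W_sub[OF \<open>F \<in> W\<close>] by blast
  qed
  have eq: "{F \<in> Fn. F \<inter> S' = {}} = image h ` {F\<in>W. F \<inter> S = {}}"
    unfolding Fn_def S_def by blast
  have ih: "inj_on (image h) X" for X by (rule inj_onI) (simp add: inj_image_eq_iff[OF inj_h])
  have "x = card {F\<in>W. F \<inter> S = {}}" unfolding S'(1) eq by (rule card_image[OF ih])
  then show "20 \<le> x" using gammaW[OF SZ cS] by simp
qed

lemma m_bound: "m 5 6 \<ge> 20"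
proof -
  have "enat (gamma 5 (\<Union>Fn) Fn) \<in> {enat (gamma 5 (\<Union>\<F>) \<F>) | \<F> :: nat set set.
                 uniform 6 \<F> \<and> intersecting \<F> \<and> tau \<F> = 6}"
    using Fn_uniform Fn_int Fn_tau by blast
  then have "enat (gamma 5 (\<Union>Fn) Fn) \<le> m 5 6" unfolding m_def by (rule Sup_upper)
  moreover have "(20::enat) \<le> enat (gamma 5 (\<Union>Fn) Fn)" using Fn_gamma by (simp add: numeral_eq_enat)
  ultimately show ?thesis by (rule order_trans[rotated])
qed

theorem proposition5p8:
  shows "m 5 6 \<ge> 20
    \<and> card (wreath T0 (ksubsets {1,2,3} 2)) = 300
    \<and> uniform 6 (wreath T0 (ksubsets {1,2,3} 2))
    \<and> intersecting (wreath T0 (ksubsets {1,2,3} 2))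
    \<and> tau (wreath T0 (ksubsets {1,2,3} 2)) = 6
    \<and> gamma 5 ({1..6} \<times> {1,2,3}) (wreath T0 (ksubsets {1,2,3} 2)) \<ge> 20"
  using m_bound W_card W_uniform W_int tau_W gamma_W unfolding W_def by blast

end
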